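(* Assume the standing setting (A1)–(A7) described in the context. For sufficiently small $h>0$ and $i\in\{1,2,3,4\}$, let $\bar x_i(h)$ be the abscissa of the unique intersection point of the graph of $g_i$ with $\partial B(h)$, and let $B_h(x):=\sqrt{(a-h)^2-x^2}$. Let $\eta_i(h)\in[0,2\pi)$ be the polar angle of the point $(\bar x_i(h),B_h(\bar x_i(h)))$ if $i\in\{1,2\}$ and of the point $(\bar x_i(h),-B_h(\bar x_i(h)))$ if $i\in\{3,4\}$, and put $\gamma_1(h)=\eta_1(h)$, $\gamma_2(h)=\pi-\eta_2(h)$, $\gamma_3(h)=\eta_3(h)-\pi$, $\gamma_4(h)=2\pi-\eta_4(h)$. Then for each $i\in\{1,2,3,4\}$, $\gamma_i(h)\sim\tau_i h^{1/2}$ as $h\to0$, where $\tau_i=\frac{3}{2a}c_i$ and $c_i=\frac{2q_i\sqrt{2a}}{3\sqrt{4-q_i^2}}$.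
   Context: Standing setting. $f$ is a Lebesgue density on $\mathbb{R}^2$ with compact support $E\subset\mathbb{R}^2$. $|\cdot|$ is the Euclidean norm, $\lambda^2$ Lebesgue measure, $A^\circ$ the interior, $\partial A$ the boundary, $\mathrm{diam}(A)=\sup\{|x-y|:x,y\in A\}$. For $0\le h<a$, $B(h)=\{z\in\mathbb{R}^2:|z|\le a-h\}$; $U(x,\varepsilon)=\{z:|z-(x,0)|<\varepsilon\}$; $Q_1,\dots,Q_4$ are the open quadrants, $Q_1=\{x>0,y>0\}$, numbered anticlockwise; $E_i:=E\cap Q_i$; $f_a(x)=\sqrt{a^2-x^2}/2$. Assumptions: (A1) $a>0$, $\mathrm{diam}(E)=2a$, $\inf\{x:(x,y)\in E\}=-a$, $\sup\{x:(x,y)\in E\}=a$. (A2) For each $\varepsilon>0$, $\mathrm{diam}(E\setminus(U(-a,\varepsilon)\cup U(a,\varepsilon)))<2a$. (A3) For each $\varepsilon>0$, $\lambda^2(E_i\cap U(a,\varepsilon))>0$ for $i\in\{1,4\}$, $\lambda^2(E_j\cap U(-a,\varepsilon))>0$ for $j\in\{2,3\}$. (A4) There are $\nu\in[0,a)$ and continuous $g_1:[\nu,a]\to[0,\infty)$, $g_4:[\nu,a]\to(-\infty,0]$, $g_1(a)=g_4(a)=0$, with $E^\circ\cap\{x>\nu\}=\{(x,y):\nu<x<a,\ g_4(x)<y<g_1(x)\}$, and continuous $g_2:[-a,-\nu]\to[0,\infty)$, $g_3:[-a,-\nu]\to(-\infty,0]$, $g_2(-a)=g_3(-a)=0$, with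 $E^\circ\cap\{x<-\nu\}=\{(x,y):-a<x<-\nu,\ g_3(x)<y<g_2(x)\}$. (A5) Constants $q_1,\dots,q_4\in(0,2)$ with $g_1/f_a\to q_1$, $-g_4/f_a\to q_4$ as $x\to a$ and $g_2/f_a\to q_2$, $-g_3/f_a\to q_3$ as $x\to-a$. (A6) For each $i$ and sufficiently small $h>0$: $E_i^\circ\cap\{|x|<\nu\}\subset B(h)$, and the graph of $g_i$ meets $\partial B(h)$ in exactly one point. (A7) For small $\varepsilon>0$, $f$ is continuous on $E\cap U(\pm a,\varepsilon)$, and $f((a,0))>0$, $f((-a,0))>0$. $g(h)\sim k(h)$ means $g(h)/k(h)\to1$. *)

theory Defs
  imports "HOL-Analysis.Analysis"
begin

definition Ball_h :: "real \<Rightarrow> real \<Rightarrow> (real \<times> real) set" where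
  "Ball_h a h = cball 0 (a - h)"

definition U :: "real \<Rightarrow> real \<Rightarrow> (real \<times> real) set" where
  "U x \<epsilon> = ball (x, 0) \<epsilon>"

definition Q1 :: "(real \<times> real) set" where "Q1 = {z. fst z > 0 \<and> snd z > 0}"
definition Q2 :: "(real \<times> real) set" where "Q2 = {z. fst z < 0 \<and> snd z > 0}"
definition Q3 :: "(real \<times> real) set" where "Q3 = {z. fst z < 0 \<and> snd z < 0}"
definition Q4 :: "(real \<times> real) set" where "Q4 = {z. fst z > 0 \<and> snd z < 0}"

definition f_a :: "real \<Rightarrow> real \<Rightarrow> real" where
  "f_a a x = sqrt (a\<^sup>2 - x\<^sup>2) / 2"

definition graph_on :: "(real \<Rightarrow> real) \<Rightarrow> real set \<Rightarrow> (real \<times> real) set" where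
  "graph_on g D = {(x, g x) | x. x \<in> D}"

definition xbar :: "(real \<Rightarrow> real) \<Rightarrow> real set \<Rightarrow> real \<Rightarrow> real \<Rightarrow> real" where
  "xbar g D a h = (THE x. x \<in> D \<and> (x, g x) \<in> frontier (Ball_h a h))"

definition B_fun :: "real \<Rightarrow> real \<Rightarrow> real \<Rightarrow> real" where
  "B_fun a h x = sqrt ((a - h)\<^sup>2 - x\<^sup>2)"

definition polar_angle :: "real \<times> real \<Rightarrow> real" where
  "polar_angle p = (THE \<theta>. 0 \<le> \<theta> \<and> \<theta> < 2 * pi \<and>
       p = (norm p * cos \<theta>, norm p * sin \<theta>))"

definition eta_up :: "(real \<Rightarrow> real) \<Rightarrow> real set \<Rightarrow> real \<Rightarrow> real \<Rightarrow> real" where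
  "eta_up g D a h = polar_angle (xbar g D a h, B_fun a h (xbar g D a h))"

definition eta_down :: "(real \<Rightarrow> real) \<Rightarrow> real set \<Rightarrow> real \<Rightarrow> real \<Rightarrow> real" where
  "eta_down g D a h = polar_angle (xbar g D a h, - B_fun a h (xbar g D a h))"

definition c_const :: "real \<Rightarrow> real \<Rightarrow> real" where
  "c_const a q = 2 * q * sqrt (2 * a) / (3 * sqrt (4 - q\<^sup>2))"

definition tau_const :: "real \<Rightarrow> real \<Rightarrow> real" where
  "tau_const a q = 3 / (2 * a) * c_const a q"

end

theory Submission
  imports Defs
begin


lemma arcsin_over: "((\<lambda>y. arcsin y / y) \<longlongrightarrow> 1) (at 0)"
proof -
  have "(arcsin has_real_derivative inverse (sqrt (1 - 0\<^sup>2))) (at 0)"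
    by (rule DERIV_arcsin) auto
  hence "((\<lambda>y. (arcsin y - arcsin 0) / (y - 0)) \<longlongrightarrow> 1) (at 0)"
    unfolding has_field_derivative_iff by simp
  thus ?thesis by simp
qed

lemma sq_lt4: fixes q::real assumes "0 \<le> q" "q < 2" shows "q\<^sup>2 < 4"
proof -
  have "q * q < 2 * 2" using assms by (intro mult_strict_mono) auto
  thus ?thesis by (simp add: power2_eq_square)
qed

lemma tau_eq: assumes "a > 0" "0 < q" "q < 2"
  shows "a * tau_const a q = q * sqrt (2*a / (4 - q\<^sup>2))"
proof -
  have "4 - q\<^sup>2 > 0" using assms sq_lt4[of q] by simp
  thus ?thesis using assms unfolding tau_const_def c_const_def
    by (simp add: real_sqrt_divide field_simps)
qed

lemma core:
  fixes a q :: real and X Bv :: "real \<Rightarrow> real"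
  assumes a: "a > 0" and q: "0 < q" "q < 2"
    and ev: "\<forall>\<^sub>F h in at_right 0. 0 \<le> Bv h \<and> (X h)\<^sup>2 + (Bv h)\<^sup>2 = (a-h)\<^sup>2"
    and lim: "((\<lambda>h. Bv h / f_a a (X h)) \<longlongrightarrow> q) (at_right 0)"
  shows "((\<lambda>h. arcsin (Bv h / (a-h)) / (tau_const a q * sqrt h)) \<longlongrightarrow> 1) (at_right 0)"
proof -
  define R where "R h = Bv h / f_a a (X h)" for h
  have q4: "4 - q\<^sup>2 > 0" using q sq_lt4[of q] by simp
  have evR: "\<forall>\<^sub>F h in at_right 0. 0 < R h \<and> R h < 2"
    using lim q unfolding R_def[abs_def] by (intro eventually_conj order_tendstoD) auto
  have evh: "\<forall>\<^sub>F h in at_right 0. 0 < h \<and> h < a"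
    using a by (simp add: eventually_at_right_field) (metis)
  have key: "\<forall>\<^sub>F h in at_right 0. Bv h / sqrt h = R h * sqrt ((2*a-h)/(4 - (R h)\<^sup>2)) \<and> 0 < Bv h"
    using ev evR evh
  proof eventually_elim
    case (elim h)
    hence h: "0 < h" "h < a" and eq: "(X h)\<^sup>2 + (Bv h)\<^sup>2 = (a-h)\<^sup>2" and B0: "0 \<le> Bv h"
      and R: "0 < R h" "R h < 2" by auto
    define s where "s = a\<^sup>2 - (X h)\<^sup>2"
    have "(X h)\<^sup>2 \<le> (a-h)\<^sup>2" using eq zero_le_power2[of "Bv h"] by linarith
    moreover have "(a-h)\<^sup>2 < a\<^sup>2" using h by (intro power_strict_mono) auto
    ultimately have s: "s > 0" unfolding s_def by simp
    have fa: "f_a a (X h) = sqrt s / 2" unfolding f_a_def s_def by simp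
    have fpos: "f_a a (X h) > 0" using s unfolding fa by simp
    have Bv: "Bv h = R h * sqrt s / 2" using fpos fa unfolding R_def by simp
    have Bpos: "Bv h > 0" unfolding Bv using R s by simp
    have B2: "(Bv h)\<^sup>2 = (R h)\<^sup>2 * s / 4" unfolding Bv using s by (simp add: power_mult_distrib power_divide)
    have d: "s - (Bv h)\<^sup>2 = h * (2*a - h)" using eq unfolding s_def by (simp add: power2_eq_square algebra_simps)
    have R4: "4 - (R h)\<^sup>2 > 0" using R sq_lt4[of "R h"] by simp
    have main: "(Bv h)\<^sup>2 * (4 - (R h)\<^sup>2) = (R h)\<^sup>2 * (h * (2*a - h))"
    proof -
      have "(Bv h)\<^sup>2 * (4 - (R h)\<^sup>2) = (Bv h)\<^sup>2 * 4 - (R h)\<^sup>2 * (Bv h)\<^sup>2" by (simp add: algebra_simps)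
      also have "\<dots> = (R h)\<^sup>2 * s - (R h)\<^sup>2 * (Bv h)\<^sup>2" using B2 by simp
      also have "\<dots> = (R h)\<^sup>2 * (s - (Bv h)\<^sup>2)" by (simp add: algebra_simps)
      finally show ?thesis using d by simp
    qed
    have "(Bv h / sqrt h)\<^sup>2 = (R h * sqrt ((2*a-h)/(4 - (R h)\<^sup>2)))\<^sup>2"
      using h R4 main by (simp add: power_mult_distrib power_divide field_simps)
    moreover have "Bv h / sqrt h \<ge> 0" "R h * sqrt ((2*a-h)/(4 - (R h)\<^sup>2)) \<ge> 0"
      using B0 h R R4 by auto
    ultimately show ?case using power2_eq_imp_eq Bpos by blast
  qed
  define L where "L = q * sqrt ((2*a-0)/(4 - q\<^sup>2))"
  have limR: "(R \<longlongrightarrow> q) (at_right 0)" using lim unfolding R_def[abs_def] .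
  have "((\<lambda>h. R h * sqrt ((2*a-h)/(4 - (R h)\<^sup>2))) \<longlongrightarrow> L) (at_right 0)"
    unfolding L_def using q4
    by (intro tendsto_intros limR) auto
  hence limB: "((\<lambda>h. Bv h / sqrt h) \<longlongrightarrow> L) (at_right 0)"
    by (rule Lim_transform_eventually) (use key in \<open>eventually_elim, auto\<close>)
  have "((\<lambda>h. Bv h / sqrt h * sqrt h) \<longlongrightarrow> L * sqrt 0) (at_right 0)"
    by (intro tendsto_intros limB) 
  hence "((\<lambda>h. Bv h / sqrt h * sqrt h) \<longlongrightarrow> 0) (at_right 0)" by simp
  hence "(Bv \<longlongrightarrow> 0) (at_right 0)"
    by (rule Lim_transform_eventually) (use evh in \<open>eventually_elim, auto\<close>)
  hence "((\<lambda>h. Bv h / (a-h)) \<longlongrightarrow> 0 / (a - 0)) (at_right 0)"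
    using a by (intro tendsto_intros) auto
  hence u0: "((\<lambda>h. Bv h / (a-h)) \<longlongrightarrow> 0) (at_right 0)" by simp
  have "\<forall>\<^sub>F h in at_right 0. 0 < Bv h / (a-h)" using key evh by eventually_elim auto
  hence "filterlim (\<lambda>h. Bv h / (a-h)) (at_right 0) (at_right 0)"
    by (rule tendsto_imp_filterlim_at_right[OF u0])
  hence lu: "filterlim (\<lambda>h. Bv h / (a-h)) (at 0) (at_right 0)"
    by (rule filterlim_mono) (simp_all add: at_le)
  have las: "((\<lambda>h. arcsin (Bv h / (a-h)) / (Bv h / (a-h))) \<longlongrightarrow> 1) (at_right 0)"
    by (rule filterlim_compose[OF arcsin_over lu])
  have "((\<lambda>h. arcsin (Bv h / (a-h)) / (Bv h / (a-h)) * (Bv h / sqrt h) / ((a-h) * tau_const a q))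
      \<longlongrightarrow> 1 * L / ((a - 0) * tau_const a q)) (at_right 0)"
    using a q4 tau_eq[OF a q] q by (intro tendsto_intros las limB) (auto simp: L_def)
  moreover have "1 * L / ((a - 0) * tau_const a q) = 1"
    using tau_eq[OF a q] q q4 a by (simp add: L_def)
  moreover have "tau_const a q > 0" using tau_eq[OF a q] q q4 a
    by (metis mult_pos_pos real_sqrt_gt_zero zero_less_mult_pos divide_pos_pos mult_2 add_pos_pos)
  ultimately show ?thesis
    apply (rule_tac Lim_transform_eventually, simp)
    using key evh apply eventually_elim
    apply (clarsimp simp: divide_simps)
    done
qed



lemma angle_unique:
  assumes "0 \<le> t1" "t1 < 2*pi" "0 \<le> t2" "t2 < 2*pi" "cos t1 = cos t2" "sin t1 = sin t2"
  shows "t1 = t2"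
proof -
  have "cos (t1 - t2) = 1" using assms(5,6) unfolding cos_diff
    using sin_cos_squared_add[of t2] by (simp add: power2_eq_square)
  then obtain n :: int where n: "t1 - t2 = real_of_int n * 2 * pi" using cos_one_2pi_int by blast
  have "\<bar>real_of_int n\<bar> * (2*pi) < 1 * (2*pi)"
  proof -
    have "\<bar>t1 - t2\<bar> < 2*pi" using assms(1-4) by linarith
    thus ?thesis using n by (simp add: abs_mult)
  qed
  hence "\<bar>real_of_int n\<bar> < 1" using pi_gt_zero by (simp only: mult_less_cancel_right)
  hence "n = 0" by linarith
  thus ?thesis using n by simp
qed

lemma polar_unique:
  assumes "x\<^sup>2 + y\<^sup>2 = r\<^sup>2" "r > 0" "0 \<le> t" "t < 2*pi" "cos t = x/r" "sin t = y/r"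
  shows "polar_angle (x,y) = t"
proof -
  have nr: "norm (x,y) = r" using assms(1,2) by (simp add: norm_Pair)
  show ?thesis unfolding polar_angle_def nr
  proof (rule the_equality)
    show "0 \<le> t \<and> t < 2 * pi \<and> (x, y) = (r * cos t, r * sin t)" using assms by simp
  next
    fix t' assume "0 \<le> t' \<and> t' < 2 * pi \<and> (x, y) = (r * cos t', r * sin t')"
    hence h: "0 \<le> t'" "t' < 2*pi" "cos t' = x/r" "sin t' = y/r" using assms(2) by auto
    show "t' = t" using angle_unique[OF h(1,2) assms(3,4)] h assms by simp
  qed
qed

lemma polar_cases:
  fixes x B r :: real
  assumes eq: "x\<^sup>2 + B\<^sup>2 = r\<^sup>2" and r: "r > 0" and B: "B > 0"
  shows "x \<ge> 0 \<Longrightarrow> polar_angle (x, B) = arcsin (B/r)"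
    and "x \<le> 0 \<Longrightarrow> polar_angle (x, B) = pi - arcsin (B/r)"
    and "x \<le> 0 \<Longrightarrow> polar_angle (x, -B) = pi + arcsin (B/r)"
    and "x \<ge> 0 \<Longrightarrow> polar_angle (x, -B) = 2*pi - arcsin (B/r)"
proof -
  define u where "u = B/r"
  have u: "0 < u" "u \<le> 1"
  proof -
    show "0 < u" using B r by (simp add: u_def)
    have "B\<^sup>2 \<le> r\<^sup>2" using eq zero_le_power2[of x] by linarith
    hence "B \<le> r" using r B by (simp add: power2_le_iff_abs_le)
    thus "u \<le> 1" using r by (simp add: u_def)
  qed
  have sq: "sqrt (1 - u\<^sup>2) = \<bar>x\<bar> / r"
  proof -
    have "1 - u\<^sup>2 = (\<bar>x\<bar> / r)\<^sup>2" using eq r by (simp add: u_def field_simps)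
    thus ?thesis using r by simp
  qed
  have ab: "0 < arcsin u" "arcsin u \<le> pi/2"
    using u arcsin_ubound[of u] arcsin_less_arcsin[of 0 u] by auto
  have ca: "cos (arcsin u) = \<bar>x\<bar>/r" using u sq by (simp add: cos_arcsin)
  have sa: "sin (arcsin u) = u" using u by simp
  have pi2: "arcsin u < pi" "0 < pi - arcsin u" "pi - arcsin u < 2*pi" "pi + arcsin u < 2*pi"
    "0 \<le> 2*pi - arcsin u" "2*pi - arcsin u < 2*pi"
    using ab pi_gt_zero by linarith+
  have eq': "x\<^sup>2 + (-B)\<^sup>2 = r\<^sup>2" using eq by simp
  show "x \<ge> 0 \<Longrightarrow> polar_angle (x, B) = arcsin (B/r)"
  proof -
    assume x: "x \<ge> 0"
    show ?thesis unfolding u_def[symmetric]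
      by (rule polar_unique[OF eq r]) (use ab pi2 ca sa x in \<open>simp_all add: u_def\<close>)
  qed
  show "x \<le> 0 \<Longrightarrow> polar_angle (x, B) = pi - arcsin (B/r)"
  proof -
    assume x: "x \<le> 0"
    have "cos (pi - arcsin u) = x/r" "sin (pi - arcsin u) = B/r" using ca sa x
      by (simp_all add: u_def)
    thus ?thesis unfolding u_def[symmetric]
      by (intro polar_unique[OF eq r]) (use pi2 in \<open>simp_all add: u_def\<close>)
  qed
  show "x \<le> 0 \<Longrightarrow> polar_angle (x, -B) = pi + arcsin (B/r)"
  proof -
    assume x: "x \<le> 0"
    have "cos (pi + arcsin u) = x/r" "sin (pi + arcsin u) = -B/r" using ca sa x
      by (simp_all add: u_def)
    thus ?thesis unfolding u_def[symmetric]
      by (intro polar_unique[OF eq' r]) (use pi2 ab in \<open>simp_all add: u_def\<close>)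
  qed
  show "x \<ge> 0 \<Longrightarrow> polar_angle (x, -B) = 2*pi - arcsin (B/r)"
  proof -
    assume x: "x \<ge> 0"
    have "cos (2*pi - arcsin u) = x/r" "sin (2*pi - arcsin u) = -B/r" using ca sa x
      by (simp_all add: u_def cos_diff sin_diff)
    thus ?thesis unfolding u_def[symmetric]
      by (intro polar_unique[OF eq' r]) (use pi2 in \<open>simp_all add: u_def\<close>)
  qed
qed



lemma root_near:
  fixes g X :: "real \<Rightarrow> real" and a \<nu> q :: real
  assumes nu: "0 \<le> \<nu>" "\<nu> < a" and cont: "continuous_on {\<nu>..a} g" and ga: "g a = 0"
    and lim: "((\<lambda>x. \<bar>g x\<bar> / f_a a x) \<longlongrightarrow> q) (at_left a)" and q: "0 < q" "q < 2"
    and uniq: "\<forall>\<^sub>F h in at_right 0. \<exists>!x. x \<in> {\<nu>..a} \<and> x\<^sup>2 + (g x)\<^sup>2 = (a-h)\<^sup>2"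
    and X: "\<forall>\<^sub>F h in at_right 0. X h \<in> {\<nu>..a} \<and> (X h)\<^sup>2 + (g (X h))\<^sup>2 = (a-h)\<^sup>2"
  shows "filterlim X (at_left a) (at_right 0)"
proof -
  have a: "a > 0" using nu by linarith
  have evh: "\<forall>\<^sub>F h in at_right 0. 0 < h \<and> h < a"
    using a by (simp add: eventually_at_right_field) (metis)
  have Xlt: "\<forall>\<^sub>F h in at_right 0. X h < a" using X evh
  proof eventually_elim
    case (elim h)
    hence "(X h)\<^sup>2 \<le> (a-h)\<^sup>2" using zero_le_power2[of "g (X h)"] by linarith
    hence "\<bar>X h\<bar> \<le> \<bar>a-h\<bar>" using power2_le_iff_abs_le abs_ge_zero
      by (metis abs_le_square_iff)
    thus ?case using elim by linarith
  qed
  have "(X \<longlongrightarrow> a) (at_right 0)"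
  proof (rule order_tendstoI)
    fix y assume "y > a"
    from Xlt show "\<forall>\<^sub>F h in at_right 0. X h < y" by eventually_elim (use \<open>y > a\<close> in linarith)
  next
    fix y assume y: "y < a"
    define q' where "q' = (q+2)/2"
    have q': "q < q'" "q' < 2" "0 < q'" using q by (auto simp: q'_def)
    have e1: "\<forall>\<^sub>F x in at_left a. \<bar>g x\<bar> / f_a a x < q'" using lim q' order_tendstoD by blast
    have e2: "\<forall>\<^sub>F x in at_left a. x \<in> {max y \<nu><..<a}" using eventually_at_left_real[of "max y \<nu>" a] y nu by simp
    obtain x0 where x0: "\<bar>g x0\<bar> / f_a a x0 < q'" "x0 \<in> {max y \<nu><..<a}"
      using eventually_happens[OF eventually_conj[OF e1 e2]] by auto
    have s: "a\<^sup>2 - x0\<^sup>2 > 0" using x0(2) nu by (simp add: power_strict_mono)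
    have fpos: "f_a a x0 > 0" using s unfolding f_a_def by simp
    have "\<bar>g x0\<bar> < q' * f_a a x0" using x0(1) fpos by (simp add: divide_less_eq)
    also have "\<dots> \<le> 2 * f_a a x0" using q' fpos by simp
    also have "\<dots> = sqrt (a\<^sup>2 - x0\<^sup>2)" unfolding f_a_def by simp
    finally have "(g x0)\<^sup>2 < (sqrt (a\<^sup>2 - x0\<^sup>2))\<^sup>2"
      by (metis abs_ge_zero power2_abs power_strict_mono zero_less_numeral)
    hence phi: "x0\<^sup>2 + (g x0)\<^sup>2 < a\<^sup>2" using s by simp
    define \<delta> where "\<delta> = a - sqrt (x0\<^sup>2 + (g x0)\<^sup>2)"
    have "sqrt (x0\<^sup>2 + (g x0)\<^sup>2) < sqrt (a\<^sup>2)" using phi real_sqrt_less_mono by blast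
    hence d: "\<delta> > 0" using a by (simp add: \<delta>_def)
    have evd: "\<forall>\<^sub>F h in at_right 0. h < \<delta>" using d by (simp add: eventually_at_right_field) metis
    show "\<forall>\<^sub>F h in at_right 0. y < X h" using X uniq evh evd
    proof eventually_elim
      case (elim h)
      define \<phi> where "\<phi> x = x\<^sup>2 + (g x)\<^sup>2" for x
      have "sqrt (\<phi> x0) < a - h" using elim by (simp add: \<phi>_def \<delta>_def)
      hence "(sqrt (\<phi> x0))\<^sup>2 < (a-h)\<^sup>2" by (intro power_strict_mono) (auto simp: \<phi>_def)
      hence l: "\<phi> x0 \<le> (a-h)\<^sup>2" by (simp add: \<phi>_def add_nonneg_nonneg)
      have "(a-h)\<^sup>2 \<le> a\<^sup>2" using elim by (intro power_mono) auto
      hence u: "(a-h)\<^sup>2 \<le> \<phi> a" by (simp add: \<phi>_def ga)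
      have cph: "continuous_on {x0..a} \<phi>" unfolding \<phi>_def
        by (intro continuous_intros continuous_on_subset[OF cont]) (use x0 in auto)
      obtain x where x: "x0 \<le> x" "x \<le> a" "\<phi> x = (a-h)\<^sup>2"
        using IVT'[of \<phi> x0 "(a-h)\<^sup>2" a, OF l u _ cph] x0 by auto
      have "x \<in> {\<nu>..a}" using x x0 by auto
      hence "X h = x" using elim x by (auto simp: \<phi>_def)
      thus ?case using x x0 by auto
    qed
  qed
  thus ?thesis unfolding filterlim_at using Xlt by (auto elim: eventually_mono)
qed


lemma frontier_iff:
  assumes "0 < a - h" shows "(x, y) \<in> frontier (Ball_h a h) \<longleftrightarrow> x\<^sup>2 + y\<^sup>2 = (a-h)\<^sup>2"
proof -
  have "(x, y) \<in> frontier (Ball_h a h) \<longleftrightarrow> sqrt (x\<^sup>2 + y\<^sup>2) = a - h"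
    unfolding Ball_h_def frontier_cball by (simp add: norm_Pair)
  also have "\<dots> \<longleftrightarrow> x\<^sup>2 + y\<^sup>2 = (a-h)\<^sup>2"
  proof
    assume "sqrt (x\<^sup>2 + y\<^sup>2) = a - h"
    hence "(sqrt (x\<^sup>2 + y\<^sup>2))\<^sup>2 = (a-h)\<^sup>2" by simp
    thus "x\<^sup>2 + y\<^sup>2 = (a-h)\<^sup>2" by simp
  next
    assume "x\<^sup>2 + y\<^sup>2 = (a-h)\<^sup>2"
    thus "sqrt (x\<^sup>2 + y\<^sup>2) = a - h" using assms by simp
  qed
  finally show ?thesis .
qed

lemma graph_on_iff: "(x, y) \<in> graph_on g D \<longleftrightarrow> x \<in> D \<and> y = g x"
  unfolding graph_on_def by auto

lemma uniq_conv:
  assumes h: "0 < a - h" and u: "\<exists>!p. p \<in> graph_on g D \<inter> frontier (Ball_h a h)"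
  shows "(\<exists>!x. x \<in> D \<and> x\<^sup>2 + (g x)\<^sup>2 = (a-h)\<^sup>2) \<and> xbar g D a h \<in> D \<and>
     (xbar g D a h)\<^sup>2 + (g (xbar g D a h))\<^sup>2 = (a-h)\<^sup>2"
proof -
  define P where "P x \<longleftrightarrow> x \<in> D \<and> x\<^sup>2 + (g x)\<^sup>2 = (a-h)\<^sup>2" for x
  have eqv: "\<And>x. (x \<in> D \<and> (x, g x) \<in> frontier (Ball_h a h)) \<longleftrightarrow> P x"
    unfolding P_def using frontier_iff[OF h] by simp
  have gr: "\<And>x. (x, g x) \<in> graph_on g D \<inter> frontier (Ball_h a h) \<longleftrightarrow> P x"
    using eqv by (simp add: graph_on_iff)
  obtain p where p: "p \<in> graph_on g D \<inter> frontier (Ball_h a h)"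
    and pu': "\<forall>p'. p' \<in> graph_on g D \<inter> frontier (Ball_h a h) \<longrightarrow> p' = p"
    using u by (rule ex1E)
  have pu: "\<And>p'. p' \<in> graph_on g D \<inter> frontier (Ball_h a h) \<Longrightarrow> p' = p" by (rule mp[OF spec[OF pu']])
  obtain x0 y0 where py: "p = (x0, y0)" by (cases p)
  have y0: "y0 = g x0" using p unfolding py by (simp add: graph_on_iff)
  have P0: "P x0" using gr p unfolding py y0 by simp
  have PU: "\<And>x. P x \<Longrightarrow> x = x0"
  proof -
    fix x assume "P x"
    hence "(x, g x) = p" using gr pu by simp
    thus "x = x0" using py by simp
  qed
  have xb: "xbar g D a h = x0" unfolding xbar_def
  proof (rule the_equality)
    show "x0 \<in> D \<and> (x0, g x0) \<in> frontier (Ball_h a h)" using P0 eqv by simp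
    fix x assume "x \<in> D \<and> (x, g x) \<in> frontier (Ball_h a h)"
    thus "x = x0" using eqv PU by simp
  qed
  have A: "\<exists>!x. P x" using P0 PU by (rule ex1I)
  show ?thesis using A P0 unfolding xb P_def[symmetric] by simp
qed

lemma uniq_neg:
  assumes "\<exists>!x. x \<in> {-a..-\<nu>} \<and> x\<^sup>2 + (g x)\<^sup>2 = (r::real)"
  shows "\<exists>!x. x \<in> {\<nu>..a} \<and> x\<^sup>2 + (g (-x))\<^sup>2 = r"
proof -
  from assms obtain x where x: "x \<in> {-a..-\<nu>}" "x\<^sup>2 + (g x)\<^sup>2 = r"
    and u: "\<And>y. y \<in> {-a..-\<nu>} \<and> y\<^sup>2 + (g y)\<^sup>2 = r \<Longrightarrow> y = x" by blast
  show ?thesis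
  proof (rule ex1I[of _ "-x"])
    show "-x \<in> {\<nu>..a} \<and> (-x)\<^sup>2 + (g (- (-x)))\<^sup>2 = r" using x by auto
  next
    fix y assume "y \<in> {\<nu>..a} \<and> y\<^sup>2 + (g (-y))\<^sup>2 = r"
    hence "-y \<in> {-a..-\<nu>} \<and> (-y)\<^sup>2 + (g (-y))\<^sup>2 = r" by auto
    hence "-y = x" by (rule u)
    thus "y = -x" by simp
  qed
qed

lemma branch_core:
  fixes g X :: "real \<Rightarrow> real" and a \<nu> q :: real
  assumes nu: "0 \<le> \<nu>" "\<nu> < a" and cont: "continuous_on {\<nu>..a} g" and ga: "g a = 0"
    and lim: "((\<lambda>x. \<bar>g x\<bar> / f_a a x) \<longlongrightarrow> q) (at_left a)" and q: "0 < q" "q < 2"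
    and uniq: "\<forall>\<^sub>F h in at_right 0. \<exists>!x. x \<in> {\<nu>..a} \<and> x\<^sup>2 + (g x)\<^sup>2 = (a-h)\<^sup>2"
    and X: "\<forall>\<^sub>F h in at_right 0. X h \<in> {\<nu>..a} \<and> (X h)\<^sup>2 + (g (X h))\<^sup>2 = (a-h)\<^sup>2"
  shows "\<forall>\<^sub>F h in at_right 0. \<bar>g (X h)\<bar> > 0"
    and "((\<lambda>h. arcsin (\<bar>g (X h)\<bar> / (a-h)) / (tau_const a q * sqrt h)) \<longlongrightarrow> 1) (at_right 0)"
proof -
  have fl: "filterlim X (at_left a) (at_right 0)" by (rule root_near[OF nu cont ga lim q uniq X])
  have l2: "((\<lambda>h. \<bar>g (X h)\<bar> / f_a a (X h)) \<longlongrightarrow> q) (at_right 0)"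
    by (rule filterlim_compose[OF lim fl])
  have "\<forall>\<^sub>F h in at_right 0. \<bar>g (X h)\<bar> / f_a a (X h) > 0" using order_tendstoD(1)[OF l2 q(1)] .
  thus "\<forall>\<^sub>F h in at_right 0. \<bar>g (X h)\<bar> > 0" by eventually_elim (auto simp: zero_less_divide_iff)
  have a: "a > 0" using nu by linarith
  show "((\<lambda>h. arcsin (\<bar>g (X h)\<bar> / (a-h)) / (tau_const a q * sqrt h)) \<longlongrightarrow> 1) (at_right 0)"
  proof (rule core[OF a q _ l2])
    show "\<forall>\<^sub>F h in at_right 0. 0 \<le> \<bar>g (X h)\<bar> \<and> (X h)\<^sup>2 + \<bar>g (X h)\<bar>\<^sup>2 = (a-h)\<^sup>2"
      using X by (rule eventually_mono) simp
  qed
qed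

lemma B_fun_eq: "x\<^sup>2 + y\<^sup>2 = (a-h)\<^sup>2 \<Longrightarrow> B_fun a h x = \<bar>y\<bar>"
  unfolding B_fun_def by (simp add: eq_diff_eq[symmetric] del: eq_diff_eq) 

lemma right_branch:
  fixes g :: "real \<Rightarrow> real" and a \<nu> q :: real
  assumes nu: "0 \<le> \<nu>" "\<nu> < a" and cont: "continuous_on {\<nu>..a} g" and ga: "g a = 0"
    and lim: "((\<lambda>x. \<bar>g x\<bar> / f_a a x) \<longlongrightarrow> q) (at_left a)" and q: "0 < q" "q < 2"
    and U: "\<forall>\<^sub>F h in at_right 0. \<exists>!p. p \<in> graph_on g {\<nu>..a} \<inter> frontier (Ball_h a h)"
  shows "((\<lambda>h. eta_up g {\<nu>..a} a h / (tau_const a q * sqrt h)) \<longlongrightarrow> 1) (at_right 0)"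
    and "((\<lambda>h. (2 * pi - eta_down g {\<nu>..a} a h) / (tau_const a q * sqrt h)) \<longlongrightarrow> 1) (at_right 0)"
proof -
  define X where "X h = xbar g {\<nu>..a} a h" for h
  have evh: "\<forall>\<^sub>F h in at_right 0. 0 < h \<and> h < a"
    using nu by (simp add: eventually_at_right_field) (metis le_less_trans)
  have C: "\<forall>\<^sub>F h in at_right 0. 0 < h \<and> h < a \<and> (\<exists>!x. x \<in> {\<nu>..a} \<and> x\<^sup>2 + (g x)\<^sup>2 = (a-h)\<^sup>2) \<and>
     X h \<in> {\<nu>..a} \<and> (X h)\<^sup>2 + (g (X h))\<^sup>2 = (a-h)\<^sup>2"
    using U evh
  proof eventually_elim
    case (elim h)
    thus ?case using uniq_conv[of a h g "{\<nu>..a}"] unfolding X_def by simp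
  qed
  have uq: "\<forall>\<^sub>F h in at_right 0. \<exists>!x. x \<in> {\<nu>..a} \<and> x\<^sup>2 + (g x)\<^sup>2 = (a-h)\<^sup>2"
    using C by (rule eventually_mono) simp
  have Xp: "\<forall>\<^sub>F h in at_right 0. X h \<in> {\<nu>..a} \<and> (X h)\<^sup>2 + (g (X h))\<^sup>2 = (a-h)\<^sup>2"
    using C by (rule eventually_mono) simp
  note bc = branch_core[OF nu cont ga lim q uq Xp]
  have E: "\<forall>\<^sub>F h in at_right 0. eta_up g {\<nu>..a} a h = arcsin (\<bar>g (X h)\<bar> / (a-h)) \<and>
            2 * pi - eta_down g {\<nu>..a} a h = arcsin (\<bar>g (X h)\<bar> / (a-h))"
    using C bc(1)
  proof eventually_elim
    case (elim h)
    hence eq: "(X h)\<^sup>2 + \<bar>g (X h)\<bar>\<^sup>2 = (a-h)\<^sup>2" and r: "0 < a - h" and B: "0 < \<bar>g (X h)\<bar>"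
      and x: "0 \<le> X h" using nu by auto
    have bf: "B_fun a h (X h) = \<bar>g (X h)\<bar>" using elim by (intro B_fun_eq) simp
    show ?case unfolding eta_up_def eta_down_def X_def[symmetric] bf
      using polar_cases(1)[OF eq r B x] polar_cases(4)[OF eq r B x] by simp
  qed
  show "((\<lambda>h. eta_up g {\<nu>..a} a h / (tau_const a q * sqrt h)) \<longlongrightarrow> 1) (at_right 0)"
    by (rule Lim_transform_eventually[OF bc(2)]) (use E in \<open>eventually_elim, simp\<close>)
  show "((\<lambda>h. (2 * pi - eta_down g {\<nu>..a} a h) / (tau_const a q * sqrt h)) \<longlongrightarrow> 1) (at_right 0)"
    by (rule Lim_transform_eventually[OF bc(2)]) (use E in \<open>eventually_elim, simp\<close>)
qed

lemma left_branch:
  fixes g :: "real \<Rightarrow> real" and a \<nu> q :: real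
  assumes nu: "0 \<le> \<nu>" "\<nu> < a" and cont: "continuous_on {-a..-\<nu>} g" and ga: "g (-a) = 0"
    and lim: "((\<lambda>x. \<bar>g x\<bar> / f_a a x) \<longlongrightarrow> q) (at_right (-a))" and q: "0 < q" "q < 2"
    and U: "\<forall>\<^sub>F h in at_right 0. \<exists>!p. p \<in> graph_on g {-a..-\<nu>} \<inter> frontier (Ball_h a h)"
  shows "((\<lambda>h. (pi - eta_up g {-a..-\<nu>} a h) / (tau_const a q * sqrt h)) \<longlongrightarrow> 1) (at_right 0)"
    and "((\<lambda>h. (eta_down g {-a..-\<nu>} a h - pi) / (tau_const a q * sqrt h)) \<longlongrightarrow> 1) (at_right 0)"
proof -
  define X where "X h = - xbar g {-a..-\<nu>} a h" for h
  define G where "G x = g (-x)" for x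
  have evh: "\<forall>\<^sub>F h in at_right 0. 0 < h \<and> h < a"
    using nu by (simp add: eventually_at_right_field) (metis le_less_trans)
  have C: "\<forall>\<^sub>F h in at_right 0. 0 < h \<and> h < a \<and> (\<exists>!x. x \<in> {\<nu>..a} \<and> x\<^sup>2 + (G x)\<^sup>2 = (a-h)\<^sup>2) \<and>
     X h \<in> {\<nu>..a} \<and> (X h)\<^sup>2 + (G (X h))\<^sup>2 = (a-h)\<^sup>2"
    using U evh
  proof eventually_elim
    case (elim h)
    hence r: "0 < a - h" by simp
    note uc = uniq_conv[OF r elim(1)]
    have "\<exists>!x. x \<in> {\<nu>..a} \<and> x\<^sup>2 + (G x)\<^sup>2 = (a-h)\<^sup>2"
      unfolding G_def by (rule uniq_neg) (use uc in blast)
    thus ?case using uc elim unfolding X_def G_def by auto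
  qed
  have uq: "\<forall>\<^sub>F h in at_right 0. \<exists>!x. x \<in> {\<nu>..a} \<and> x\<^sup>2 + (G x)\<^sup>2 = (a-h)\<^sup>2"
    using C by (rule eventually_mono) simp
  have Xp: "\<forall>\<^sub>F h in at_right 0. X h \<in> {\<nu>..a} \<and> (X h)\<^sup>2 + (G (X h))\<^sup>2 = (a-h)\<^sup>2"
    using C by (rule eventually_mono) simp
  have contG: "continuous_on {\<nu>..a} G" unfolding G_def
    by (rule continuous_on_compose2[OF cont]) (auto intro!: continuous_intros)
  have Ga: "G a = 0" using ga by (simp add: G_def)
  have limG: "((\<lambda>x. \<bar>G x\<bar> / f_a a x) \<longlongrightarrow> q) (at_left a)"
    unfolding filterlim_at_left_to_right[where a=a] G_def using lim by (simp add: f_a_def)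
  note bc = branch_core[OF nu contG Ga limG q uq Xp]
  have E: "\<forall>\<^sub>F h in at_right 0. pi - eta_up g {-a..-\<nu>} a h = arcsin (\<bar>G (X h)\<bar> / (a-h)) \<and>
            eta_down g {-a..-\<nu>} a h - pi = arcsin (\<bar>G (X h)\<bar> / (a-h))"
    using C bc(1)
  proof eventually_elim
    case (elim h)
    define x where "x = xbar g {-a..-\<nu>} a h"
    have xX: "X h = - x" "G (X h) = g x" unfolding x_def X_def G_def by simp_all
    hence eq: "x\<^sup>2 + \<bar>g x\<bar>\<^sup>2 = (a-h)\<^sup>2" and r: "0 < a - h" and B: "0 < \<bar>g x\<bar>"
      and xx: "x \<le> 0" using nu elim by auto
    have bf: "B_fun a h x = \<bar>g x\<bar>" using eq by (intro B_fun_eq) simp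
    show ?case unfolding eta_up_def eta_down_def x_def[symmetric] bf xX
      using polar_cases(2)[OF eq r B xx] polar_cases(3)[OF eq r B xx] by (simp add: G_def)
  qed
  show "((\<lambda>h. (pi - eta_up g {-a..-\<nu>} a h) / (tau_const a q * sqrt h)) \<longlongrightarrow> 1) (at_right 0)"
    by (rule Lim_transform_eventually[OF bc(2)]) (use E in \<open>eventually_elim, simp\<close>)
  show "((\<lambda>h. (eta_down g {-a..-\<nu>} a h - pi) / (tau_const a q * sqrt h)) \<longlongrightarrow> 1) (at_right 0)"
    by (rule Lim_transform_eventually[OF bc(2)]) (use E in \<open>eventually_elim, simp\<close>)
qed


theorem lemma2:
  fixes f :: "real \<times> real \<Rightarrow> real" and E :: "(real \<times> real) set"
    and a \<nu> q1 q2 q3 q4 :: real and g1 g2 g3 g4 :: "real \<Rightarrow> real"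
  assumes dens_meas: "f \<in> borel_measurable lborel"
    and dens_nonneg: "\<And>z. f z \<ge> 0"
    and dens_int: "integrable lborel f"
    and dens_one: "integral\<^sup>L lborel f = 1"
    and supp: "E = closure {z. f z \<noteq> 0}"
    and supp_compact: "compact E"
    \<comment> \<open>(A1)\<close>
    and A1: "a > 0" "diameter E = 2 * a" "Inf (fst ` E) = - a" "Sup (fst ` E) = a"
    \<comment> \<open>(A2)\<close>
    and A2: "\<And>\<epsilon>. \<epsilon> > 0 \<Longrightarrow> diameter (E - (U (- a) \<epsilon> \<union> U a \<epsilon>)) < 2 * a"
    \<comment> \<open>(A3)\<close>
    and A3: "\<And>\<epsilon>. \<epsilon> > 0 \<Longrightarrow>
        emeasure lborel (E \<inter> Q1 \<inter> U a \<epsilon>) > 0 \<and> emeasure lborel (E \<inter> Q4 \<inter> U a \<epsilon>) > 0 \<and>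
        emeasure lborel (E \<inter> Q2 \<inter> U (- a) \<epsilon>) > 0 \<and> emeasure lborel (E \<inter> Q3 \<inter> U (- a) \<epsilon>) > 0"
    \<comment> \<open>(A4)\<close>
    and A4_nu: "0 \<le> \<nu>" "\<nu> < a"
    and A4_right: "continuous_on {\<nu>..a} g1" "continuous_on {\<nu>..a} g4"
       "\<forall>x\<in>{\<nu>..a}. g1 x \<ge> 0" "\<forall>x\<in>{\<nu>..a}. g4 x \<le> 0" "g1 a = 0" "g4 a = 0"
       "interior E \<inter> {z. fst z > \<nu>} = {(x, y). \<nu> < x \<and> x < a \<and> g4 x < y \<and> y < g1 x}"
    and A4_left: "continuous_on {-a..-\<nu>} g2" "continuous_on {-a..-\<nu>} g3"
       "\<forall>x\<in>{-a..-\<nu>}. g2 x \<ge> 0" "\<forall>x\<in>{-a..-\<nu>}. g3 x \<le> 0" "g2 (-a) = 0" "g3 (-a) = 0"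
       "interior E \<inter> {z. fst z < - \<nu>} = {(x, y). - a < x \<and> x < - \<nu> \<and> g3 x < y \<and> y < g2 x}"
    \<comment> \<open>(A5)\<close>
    and A5_q: "q1 \<in> {0<..<2}" "q2 \<in> {0<..<2}" "q3 \<in> {0<..<2}" "q4 \<in> {0<..<2}"
    and A5_lim: "((\<lambda>x. g1 x / f_a a x) \<longlongrightarrow> q1) (at_left a)"
       "((\<lambda>x. - g4 x / f_a a x) \<longlongrightarrow> q4) (at_left a)"
       "((\<lambda>x. g2 x / f_a a x) \<longlongrightarrow> q2) (at_right (- a))"
       "((\<lambda>x. - g3 x / f_a a x) \<longlongrightarrow> q3) (at_right (- a))"
    \<comment> \<open>(A6)\<close>
    and A6: "\<forall>\<^sub>F h in at_right 0.
        interior (E \<inter> Q1) \<inter> {z. \<bar>fst z\<bar> < \<nu>} \<subseteq> Ball_h a h \<and>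
        interior (E \<inter> Q2) \<inter> {z. \<bar>fst z\<bar> < \<nu>} \<subseteq> Ball_h a h \<and>
        interior (E \<inter> Q3) \<inter> {z. \<bar>fst z\<bar> < \<nu>} \<subseteq> Ball_h a h \<and>
        interior (E \<inter> Q4) \<inter> {z. \<bar>fst z\<bar> < \<nu>} \<subseteq> Ball_h a h \<and>
        (\<exists>!p. p \<in> graph_on g1 {\<nu>..a} \<inter> frontier (Ball_h a h)) \<and>
        (\<exists>!p. p \<in> graph_on g2 {-a..-\<nu>} \<inter> frontier (Ball_h a h)) \<and>
        (\<exists>!p. p \<in> graph_on g3 {-a..-\<nu>} \<inter> frontier (Ball_h a h)) \<and>
        (\<exists>!p. p \<in> graph_on g4 {\<nu>..a} \<inter> frontier (Ball_h a h))"
    \<comment> \<open>(A7)\<close>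
    and A7: "\<exists>\<epsilon>>0. continuous_on (E \<inter> U a \<epsilon>) f \<and> continuous_on (E \<inter> U (- a) \<epsilon>) f"
       "f (a, 0) > 0" "f (- a, 0) > 0"
  shows "((\<lambda>h. eta_up g1 {\<nu>..a} a h / (tau_const a q1 * sqrt h)) \<longlongrightarrow> 1) (at_right 0) \<and>
         ((\<lambda>h. (pi - eta_up g2 {-a..-\<nu>} a h) / (tau_const a q2 * sqrt h)) \<longlongrightarrow> 1) (at_right 0) \<and>
         ((\<lambda>h. (eta_down g3 {-a..-\<nu>} a h - pi) / (tau_const a q3 * sqrt h)) \<longlongrightarrow> 1) (at_right 0) \<and>
         ((\<lambda>h. (2 * pi - eta_down g4 {\<nu>..a} a h) / (tau_const a q4 * sqrt h)) \<longlongrightarrow> 1) (at_right 0)"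
proof -
  have nu: "0 \<le> \<nu>" "\<nu> < a" using A4_nu by auto
  have ev_l: "\<forall>\<^sub>F x in at_left a. x \<in> {\<nu><..<a}" by (rule eventually_at_left_real) (use nu in simp)
  have ev_r: "\<forall>\<^sub>F x in at_right (-a). x \<in> {-a<..<-\<nu>}" by (rule eventually_at_right_real) (use nu in simp)
  have lim1: "((\<lambda>x. \<bar>g1 x\<bar> / f_a a x) \<longlongrightarrow> q1) (at_left a)"
    by (rule Lim_transform_eventually[OF A5_lim(1)]) (use ev_l in \<open>rule eventually_mono, use A4_right(3) in auto\<close>)
  have lim4: "((\<lambda>x. \<bar>g4 x\<bar> / f_a a x) \<longlongrightarrow> q4) (at_left a)"
    by (rule Lim_transform_eventually[OF A5_lim(2)]) (use ev_l in \<open>rule eventually_mono, use A4_right(4) in auto\<close>)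
  have lim2: "((\<lambda>x. \<bar>g2 x\<bar> / f_a a x) \<longlongrightarrow> q2) (at_right (-a))"
    by (rule Lim_transform_eventually[OF A5_lim(3)]) (use ev_r in \<open>rule eventually_mono, use A4_left(3) in auto\<close>)
  have lim3: "((\<lambda>x. \<bar>g3 x\<bar> / f_a a x) \<longlongrightarrow> q3) (at_right (-a))"
    by (rule Lim_transform_eventually[OF A5_lim(4)]) (use ev_r in \<open>rule eventually_mono, use A4_left(4) in auto\<close>)
  have U1: "\<forall>\<^sub>F h in at_right 0. \<exists>!p. p \<in> graph_on g1 {\<nu>..a} \<inter> frontier (Ball_h a h)"
    using A6 by (rule eventually_mono) (elim conjE)
  have U2: "\<forall>\<^sub>F h in at_right 0. \<exists>!p. p \<in> graph_on g2 {-a..-\<nu>} \<inter> frontier (Ball_h a h)"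
    using A6 by (rule eventually_mono) (elim conjE)
  have U3: "\<forall>\<^sub>F h in at_right 0. \<exists>!p. p \<in> graph_on g3 {-a..-\<nu>} \<inter> frontier (Ball_h a h)"
    using A6 by (rule eventually_mono) (elim conjE)
  have U4: "\<forall>\<^sub>F h in at_right 0. \<exists>!p. p \<in> graph_on g4 {\<nu>..a} \<inter> frontier (Ball_h a h)"
    using A6 by (rule eventually_mono) (elim conjE)
  have q: "0 < q1" "q1 < 2" "0 < q2" "q2 < 2" "0 < q3" "q3 < 2" "0 < q4" "q4 < 2" using A5_q by auto
  show ?thesis
    using right_branch(1)[OF nu A4_right(1) A4_right(5) lim1 q(1,2) U1]
      right_branch(2)[OF nu A4_right(2) A4_right(6) lim4 q(7,8) U4]
      left_branch(1)[OF nu A4_left(1) A4_left(5) lim2 q(3,4) U2]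
      left_branch(2)[OF nu A4_left(2) A4_left(6) lim3 q(5,6) U3]
    by blast
qed


end
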